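(* For a liner $X$ the following are equivalent: (1) $X$ is Proclus; (2) $X$ is proaffine and $3$-proregular; (3) for every line $L\subseteq X$ and points $o\in L$, $x\in X\setminus L$, $y\in\overline{L\cup\{x\}}$, the set $\{v\in\overline{ox}:\overline{vy}\cap L=\varnothing\}$ contains at most one point.
   Context: A liner is a set $X$ of points with a family of subsets called lines such that any two distinct points lie in a unique line and every line contains at least two points. For distinct $x,y$, $\overline{xy}$ is the line through them and $\overline{xx}:=\{x\}$. A set is flat if it contains $\overline{xy}$ for all its distinct points; $\overline A$ is the smallest flat containing $A$; the rank $\|A\|$ is the smallest cardinality of $B\subseteq X$ with $A\subseteq\overline B$; a plane is a flat of rank 3. $X$ is Proclus if for every plane $P$, line $L\subseteq P$ and point $x\in P\setminus L$ there is at most one line $\Lambda$ with $x\in\Lambda\subseteq P\setminus L$. $X$ is proaffine if for all $o,x,y\in X$ and $p\in\overline{xy}\setminus\overline{ox}$ there exists $u\in\overline{oy}$ such that $\overline{vp}\cap\overline{ox}\ne\varnothing$ for every $v\in\overline{oy}\setminus\{u\}$. $X$ is $3$-proregular if for every set $A\subseteq X$ with $|A|<3$ and all points $o\in\overline A$, $p\in X\setminus\overline A$ with $\overline{op}\ne\{o,p\}$, we have $\overline{\{p\}\cup A}=\bigcup_{u\in\overline{op}}\bigcup_{a\in\overline A}\overline{ua}$. *)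

theory Defs
  imports Main
begin

definition liner :: "'a set \<Rightarrow> 'a set set \<Rightarrow> bool" where
  "liner X Ls \<longleftrightarrow>
     (\<forall>L\<in>Ls. L \<subseteq> X \<and> (\<exists>a b. a \<noteq> b \<and> a \<in> L \<and> b \<in> L)) \<and>
     (\<forall>x\<in>X. \<forall>y\<in>X. x \<noteq> y \<longrightarrow> (\<exists>!L. L \<in> Ls \<and> x \<in> L \<and> y \<in> L))"

definition line_through :: "'a set set \<Rightarrow> 'a \<Rightarrow> 'a \<Rightarrow> 'a set" where
  "line_through Ls x y = (if x = y then {x} else (THE L. L \<in> Ls \<and> x \<in> L \<and> y \<in> L))"

definition flat :: "'a set \<Rightarrow> 'a set set \<Rightarrow> 'a set \<Rightarrow> bool" where
  "flat X Ls A \<longleftrightarrow> A \<subseteq> X \<and> (\<forall>x\<in>A. \<forall>y\<in>A. x \<noteq> y \<longrightarrow> line_through Ls x y \<subseteq> A)"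

definition flat_hull :: "'a set \<Rightarrow> 'a set set \<Rightarrow> 'a set \<Rightarrow> 'a set" where
  "flat_hull X Ls A = \<Inter>{F. flat X Ls F \<and> A \<subseteq> F}"

definition has_rank :: "'a set \<Rightarrow> 'a set set \<Rightarrow> 'a set \<Rightarrow> nat \<Rightarrow> bool" where
  "has_rank X Ls A n \<longleftrightarrow>
     (\<exists>B. B \<subseteq> X \<and> finite B \<and> card B = n \<and> A \<subseteq> flat_hull X Ls B) \<and>
     (\<forall>B. B \<subseteq> X \<and> finite B \<and> A \<subseteq> flat_hull X Ls B \<longrightarrow> n \<le> card B)"

definition plane :: "'a set \<Rightarrow> 'a set set \<Rightarrow> 'a set \<Rightarrow> bool" where
  "plane X Ls P \<longleftrightarrow> flat X Ls P \<and> has_rank X Ls P 3"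

definition proclus :: "'a set \<Rightarrow> 'a set set \<Rightarrow> bool" where
  "proclus X Ls \<longleftrightarrow>
     (\<forall>P L x. plane X Ls P \<and> L \<in> Ls \<and> L \<subseteq> P \<and> x \<in> P - L \<longrightarrow>
        (\<forall>\<Lambda>1 \<Lambda>2. \<Lambda>1 \<in> Ls \<and> x \<in> \<Lambda>1 \<and> \<Lambda>1 \<subseteq> P - L \<and>
                  \<Lambda>2 \<in> Ls \<and> x \<in> \<Lambda>2 \<and> \<Lambda>2 \<subseteq> P - L \<longrightarrow> \<Lambda>1 = \<Lambda>2))"

definition proaffine :: "'a set \<Rightarrow> 'a set set \<Rightarrow> bool" where
  "proaffine X Ls \<longleftrightarrow>
     (\<forall>oo\<in>X. \<forall>x\<in>X. \<forall>y\<in>X. \<forall>p \<in> line_through Ls x y - line_through Ls oo x.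
        (\<exists>u \<in> line_through Ls oo y. \<forall>v \<in> line_through Ls oo y - {u}.
            line_through Ls v p \<inter> line_through Ls oo x \<noteq> {}))"

definition proregular3 :: "'a set \<Rightarrow> 'a set set \<Rightarrow> bool" where
  "proregular3 X Ls \<longleftrightarrow>
     (\<forall>A oo p. A \<subseteq> X \<and> finite A \<and> card A < 3 \<and> oo \<in> flat_hull X Ls A \<and>
        p \<in> X - flat_hull X Ls A \<and> line_through Ls oo p \<noteq> {oo, p} \<longrightarrow>
        flat_hull X Ls (insert p A) =
          (\<Union>u \<in> line_through Ls oo p. \<Union>a \<in> flat_hull X Ls A. line_through Ls u a))"

definition cond3 :: "'a set \<Rightarrow> 'a set set \<Rightarrow> bool" where
  "cond3 X Ls \<longleftrightarrow>
     (\<forall>L\<in>Ls. \<forall>oo\<in>L. \<forall>x \<in> X - L. \<forall>y \<in> flat_hull X Ls (L \<union> {x}).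
        (\<forall>v w. v \<in> line_through Ls oo x \<and> line_through Ls v y \<inter> L = {} \<and>
               w \<in> line_through Ls oo x \<and> line_through Ls w y \<inter> L = {} \<longrightarrow> v = w))"

end

theory Submission
  imports Defs
begin


locale lnr =
  fixes X :: "'a set" and Ls :: "'a set set"
  assumes liner: "liner X Ls"
begin

abbreviation ln where "ln x y \<equiv> line_through Ls x y"
abbreviation hl where "hl A \<equiv> flat_hull X Ls A"

lemma line_sub: "L \<in> Ls \<Longrightarrow> L \<subseteq> X"
  using liner unfolding liner_def by blast

lemma line_two: "L \<in> Ls \<Longrightarrow> \<exists>a b. a \<noteq> b \<and> a \<in> L \<and> b \<in> L"
  using liner unfolding liner_def by blast

lemma line_uniq: assumes "x \<in> X" "y \<in> X" "x \<noteq> y" shows "\<exists>!L. L \<in> Ls \<and> x \<in> L \<and> y \<in> L"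
proof -
  have h: "\<forall>x\<in>X. \<forall>y\<in>X. x \<noteq> y \<longrightarrow> (\<exists>!L. L \<in> Ls \<and> x \<in> L \<and> y \<in> L)"
    using liner unfolding liner_def by (rule conjunct2)
  show ?thesis using h[rule_format, OF assms] .
qed

lemma ln_props: assumes "x \<in> X" "y \<in> X" "x \<noteq> y"
  shows "ln x y \<in> Ls \<and> x \<in> ln x y \<and> y \<in> ln x y"
proof -
  have "ln x y = (THE L. L \<in> Ls \<and> x \<in> L \<and> y \<in> L)" using assms by (simp add: line_through_def)
  then show ?thesis using theI'[OF line_uniq[OF assms]] by simp
qed

lemma ln_eq: assumes "L \<in> Ls" "x \<in> L" "y \<in> L" "x \<noteq> y" shows "ln x y = L"
proof -
  have xy: "x \<in> X" "y \<in> X" using assms line_sub by auto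
  show ?thesis using ln_props[OF xy assms(4)] line_uniq[OF xy assms(4)] assms by blast
qed

lemma ln_refl[simp]: "ln x x = {x}" by (simp add: line_through_def)

lemma ln_left: "x \<in> X \<Longrightarrow> y \<in> X \<Longrightarrow> x \<in> ln x y"
  using ln_props by (cases "x = y") auto
lemma ln_right: "x \<in> X \<Longrightarrow> y \<in> X \<Longrightarrow> y \<in> ln x y"
  using ln_props by (cases "x = y") auto
lemma ln_subX: "x \<in> X \<Longrightarrow> y \<in> X \<Longrightarrow> ln x y \<subseteq> X"
  using ln_props line_sub by (cases "x = y") auto
lemma ln_sym: "x \<in> X \<Longrightarrow> y \<in> X \<Longrightarrow> ln x y = ln y x"
  using ln_props ln_eq by (cases "x = y") auto
lemma ln_in: "x \<in> X \<Longrightarrow> y \<in> X \<Longrightarrow> x \<noteq> y \<Longrightarrow> ln x y \<in> Ls"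
  using ln_props by auto

lemma ln_eq2: assumes "x \<in> X" "y \<in> X" "x \<noteq> y" "u \<in> ln x y" "v \<in> ln x y" "u \<noteq> v"
  shows "ln u v = ln x y"
  using ln_eq[OF ln_in[OF assms(1-3)] assms(4-6)] .

lemma ln_sub_line: assumes "L \<in> Ls" "x \<in> L" "y \<in> L" shows "ln x y \<subseteq> L"
  using assms ln_eq by (cases "x = y") auto

lemma two_lines: assumes "L \<in> Ls" "M \<in> Ls" "x \<in> L" "y \<in> L" "x \<in> M" "y \<in> M" "x \<noteq> y"
  shows "L = M"
  using ln_eq assms by metis

lemma line_flat: "L \<in> Ls \<Longrightarrow> flat X Ls L"
  unfolding flat_def using line_sub ln_eq by auto

lemma flat_ln: "flat X Ls F \<Longrightarrow> x \<in> F \<Longrightarrow> y \<in> F \<Longrightarrow> ln x y \<subseteq> F"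
  unfolding flat_def by (cases "x = y") auto

lemma flat_X: "flat X Ls X"
  unfolding flat_def using ln_subX by auto

lemma hull_flat: assumes that: "A \<subseteq> X" shows "flat X Ls (hl A)"
proof -
  have "\<Inter>{F. flat X Ls F \<and> A \<subseteq> F} \<subseteq> X" using flat_X that by auto
  moreover have "ln x y \<subseteq> \<Inter>{F. flat X Ls F \<and> A \<subseteq> F}"
    if "x \<in> \<Inter>{F. flat X Ls F \<and> A \<subseteq> F}" "y \<in> \<Inter>{F. flat X Ls F \<and> A \<subseteq> F}" for x y
    using that flat_ln by blast
  ultimately show ?thesis unfolding flat_hull_def flat_def by blast
qed

lemma hull_sub: "A \<subseteq> X \<Longrightarrow> A \<subseteq> hl A"
  unfolding flat_hull_def by auto

lemma hull_min: "flat X Ls F \<Longrightarrow> A \<subseteq> F \<Longrightarrow> hl A \<subseteq> F"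
  unfolding flat_hull_def by auto

lemma hull_X: "A \<subseteq> X \<Longrightarrow> hl A \<subseteq> X"
  using hull_min[OF flat_X] by auto

lemma hull_mono: "A \<subseteq> B \<Longrightarrow> B \<subseteq> X \<Longrightarrow> hl A \<subseteq> hl B"
  by (meson hull_flat hull_min hull_sub order_trans)

lemma flat_empty: "flat X Ls {}" unfolding flat_def by auto
lemma flat_single: "x \<in> X \<Longrightarrow> flat X Ls {x}" unfolding flat_def by auto

lemma hull_empty: "hl {} = {}"
  using hull_min[OF flat_empty] by auto
lemma hull_single: "x \<in> X \<Longrightarrow> hl {x} = {x}"
  using hull_min[OF flat_single] hull_sub[of "{x}"] by auto
lemma hull_two: assumes "x \<in> X" "y \<in> X" shows "hl {x, y} = ln x y"
proof (cases "x = y")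
  case True then show ?thesis using hull_single assms by simp
next
  case False
  have "hl {x,y} \<subseteq> ln x y" using hull_min[OF line_flat[OF ln_in[OF assms False]]] ln_props[OF assms False] by auto
  moreover have "ln x y \<subseteq> hl {x,y}" using flat_ln[OF hull_flat, of "{x,y}"] hull_sub[of "{x,y}"] assms by auto
  ultimately show ?thesis by auto
qed

lemma hull_line: assumes "L \<in> Ls" "a \<in> L" "b \<in> L" "a \<noteq> b" shows "hl {a,b} = L"
proof -
  have "a \<in> X" "b \<in> X" using assms line_sub by auto
  then have "hl {a,b} = ln a b" using hull_two by auto
  then show ?thesis using ln_eq assms by auto
qed

end



context lnr begin

lemma hull_L_ins: assumes "L \<in> Ls" "a \<in> L" "b \<in> L" "a \<noteq> b" "x \<in> X"
  shows "hl (L \<union> {x}) = hl {x,a,b}"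
proof
  have LX: "L \<subseteq> X" using line_sub assms by auto
  have ab: "{a,b} \<subseteq> X" using LX assms by auto
  show "hl (L \<union> {x}) \<subseteq> hl {x,a,b}"
  proof (rule hull_min[OF hull_flat])
    show "{x,a,b} \<subseteq> X" using ab assms by auto
    have "L = hl {a,b}" using hull_line assms by auto
    also have "\<dots> \<subseteq> hl {x,a,b}" using hull_mono[of "{a,b}" "{x,a,b}"] ab assms by auto
    finally show "L \<union> {x} \<subseteq> hl {x,a,b}" using hull_sub[of "{x,a,b}"] ab assms by auto
  qed
  show "hl {x,a,b} \<subseteq> hl (L \<union> {x})"
    using hull_mono[of "{x,a,b}" "L \<union> {x}"] LX assms by auto
qed

lemma flat_two_point: assumes M: "M \<in> Ls" and r0: "r0 \<in> X" "r0 \<notin> M" and all2: "\<forall>oo\<in>M. ln oo r0 = {oo, r0}"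
  shows "flat X Ls (M \<union> {r0})"
  unfolding flat_def
proof (intro conjI ballI impI)
  have MX: "M \<subseteq> X" using line_sub M by blast
  then show "M \<union> {r0} \<subseteq> X" using r0 by blast
  fix x y assume xy: "x \<in> M \<union> {r0}" "y \<in> M \<union> {r0}" "x \<noteq> y"
  show "ln x y \<subseteq> M \<union> {r0}"
  proof (cases "x = r0")
    case True
    then have yM: "y \<in> M" using xy by blast
    then have yX: "y \<in> X" using MX by blast
    have "ln x y = ln y r0" using ln_sym[OF r0(1) yX] True by simp
    also have "\<dots> = {y, r0}" using all2 yM by blast
    finally show ?thesis using yM by simp
  next
    case False
    then have xM: "x \<in> M" using xy by blast
    show ?thesis
    proof (cases "y = r0")
      case True
      have "ln x y = {x, r0}" using all2 xM True by blast
      then show ?thesis using xM by simp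
    next
      case False
      then have "y \<in> M" using xy by blast
      then show ?thesis using ln_sub_line[OF M xM] by blast
    qed
  qed
qed

lemma pr_use: assumes "proregular3 X Ls" "A \<subseteq> X" "finite A" "card A < 3" "oo \<in> hl A"
  "p \<in> X" "p \<notin> hl A" "ln oo p \<noteq> {oo, p}"
  shows "hl (insert p A) = (\<Union>u \<in> ln oo p. \<Union>a \<in> hl A. ln u a)"
proof -
  have h: "\<forall>A oo p. A \<subseteq> X \<and> finite A \<and> card A < 3 \<and> oo \<in> hl A \<and>
        p \<in> X - hl A \<and> ln oo p \<noteq> {oo, p} \<longrightarrow>
        hl (insert p A) = (\<Union>u \<in> ln oo p. \<Union>a \<in> hl A. ln u a)"
    using assms(1) unfolding proregular3_def .
  show ?thesis using h[rule_format, of A oo p] assms(2-8) by blast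
qed

definition good :: "'a set \<Rightarrow> 'a set \<Rightarrow> bool" where
  "good H M \<longleftrightarrow> M \<in> Ls \<and> M \<subseteq> H \<and> (\<forall>r \<in> H - M. H \<subseteq> hl (M \<union> {r}))"

lemma S1:
  assumes pr: "proregular3 X Ls" and HX: "H \<subseteq> X" and M: "M \<in> Ls" "M \<subseteq> H"
    and r0: "r0 \<in> H - M" and Hs: "H \<subseteq> hl (M \<union> {r0})"
  shows "good H M"
  unfolding good_def
proof (intro conjI M ballI)
  fix r assume r: "r \<in> H - M"
  have MX: "M \<subseteq> X" using line_sub M by auto
  have r0X: "r0 \<in> X" "r \<in> X" using r0 r HX by auto
  obtain a b where ab: "a \<noteq> b" "a \<in> M" "b \<in> M" using line_two M by blast
  have hM: "hl {a,b} = M" using hull_line M ab by auto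
  define Q where "Q = hl (M \<union> {r})"
  have Qf: "flat X Ls Q" unfolding Q_def using hull_flat MX r0X by auto
  have MQ: "M \<subseteq> Q" and rQ: "r \<in> Q" unfolding Q_def using hull_sub[of "M \<union> {r}"] MX r0X by auto
  have "r0 \<in> Q"
  proof (cases "\<exists>oo\<in>M. ln oo r0 \<noteq> {oo, r0}")
    case True
    then obtain oo where oo: "oo \<in> M" "ln oo r0 \<noteq> {oo, r0}" by blast
    have oX: "oo \<in> X" using oo MX by auto
    have "hl (insert r0 {a,b}) = (\<Union>u \<in> ln oo r0. \<Union>t \<in> hl {a,b}. ln u t)"
      using pr_use[OF pr, of "{a,b}" oo r0] ab MX oo r0 r0X hM by auto
    moreover have "hl (insert r0 {a,b}) = hl (M \<union> {r0})"
      using hull_L_ins[OF M(1) ab(2,3,1) r0X(1)] by simp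
    ultimately have "hl (M \<union> {r0}) = (\<Union>u \<in> ln oo r0. \<Union>t \<in> hl {a,b}. ln u t)" by simp
    moreover have "r \<in> hl (M \<union> {r0})" using Hs r by blast
    ultimately have "r \<in> (\<Union>u \<in> ln oo r0. \<Union>t \<in> hl {a,b}. ln u t)" by simp
    then obtain u t where ut: "u \<in> ln oo r0" "t \<in> M" "r \<in> ln u t" unfolding hM by blast
    have or0: "oo \<noteq> r0" using oo r0 by auto
    have uX: "u \<in> X" using ut ln_subX oX r0X by auto
    have tX: "t \<in> X" using ut MX by auto
    have rt: "r \<noteq> t" using r ut by auto
    show "r0 \<in> Q"
    proof (cases "u = r0")
      case True
      have "ln r t = ln r0 t"
        using ln_eq2[of r0 t r t] True ut rt r0X tX ln_right[OF r0X(1) tX] r0 by auto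
      then have "r0 \<in> ln r t" using ln_left r0X tX by auto
      then show ?thesis using flat_ln[OF Qf rQ] MQ ut by auto
    next
      case False
      have uo: "u \<noteq> oo"
      proof
        assume "u = oo"
        then have "r \<in> M" using ln_sub_line[OF M(1) oo(1) ut(2)] ut by auto
        then show False using r by auto
      qed
      have ut2: "u \<noteq> t"
      proof
        assume "u = t" then have "r = t" using ut by auto
        then show False using r ut by auto
      qed
      have "ln r t = ln u t" using ln_eq2[of u t r t] ut ut2 rt uX tX ln_right by auto
      then have "u \<in> Q" using flat_ln[OF Qf rQ, of t] MQ ut ln_left[OF uX tX] by auto
      moreover have "oo \<in> Q" using MQ oo by auto
      moreover have "ln oo u = ln oo r0" using ln_eq2[of oo r0 oo u] uo ut oX r0X or0 ln_left by auto
      ultimately show ?thesis using flat_ln[OF Qf, of oo u] ln_right[OF oX r0X(1)] by auto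
    qed
  next
    case False
    then have "flat X Ls (M \<union> {r0})" using flat_two_point M(1) r0 r0X by auto
    then have "H \<subseteq> M \<union> {r0}" using Hs hull_min by blast
    then show ?thesis using r rQ by auto
  qed
  then have "M \<union> {r0} \<subseteq> Q" using MQ by auto
  then have "hl (M \<union> {r0}) \<subseteq> Q" using hull_min Qf by auto
  then show "H \<subseteq> hl (M \<union> {r})" using Hs Q_def by auto
qed


end


context lnr begin

lemma S2:
  assumes pr: "proregular3 X Ls" and HX: "H \<subseteq> X" and Hf: "flat X Ls H" and gM: "good H M"
    and L: "L \<in> Ls" "L \<subseteq> H" "L \<noteq> M" and p: "p \<in> L" "p \<in> M"
  shows "good H L"
proof -
  have M: "M \<in> Ls" "M \<subseteq> H" and gm: "\<forall>r \<in> H - M. H \<subseteq> hl (M \<union> {r})" using gM unfolding good_def by auto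
  obtain a1 a2 where a: "a1 \<noteq> a2" "a1 \<in> M" "a2 \<in> M" using line_two M(1) by blast
  obtain z where z: "z \<in> M" "z \<noteq> p" using a by blast
  have zL: "z \<notin> L" using two_lines[OF L(1) M(1) p(1) _ p(2) z(1)] z L(3) by metis
  obtain b1 b2 where b: "b1 \<noteq> b2" "b1 \<in> L" "b2 \<in> L" using line_two L(1) by blast
  obtain r where r: "r \<in> L" "r \<noteq> p" using b by blast
  have rM: "r \<notin> M" using two_lines[OF L(1) M(1) p(1) r(1) p(2)] r L(3) by metis
  have LX: "L \<subseteq> X" using line_sub L by auto
  have zX: "z \<in> X" using z M HX by auto
  define Q where "Q = hl (L \<union> {z})"
  have Qf: "flat X Ls Q" unfolding Q_def using hull_flat LX zX by auto
  have LQ: "L \<subseteq> Q" and zQ: "z \<in> Q" unfolding Q_def using hull_sub[of "L \<union> {z}"] LX zX by auto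
  have "ln p z = M" using ln_eq[OF M(1) p(2) z(1)] z by auto
  then have MQ: "M \<subseteq> Q" using flat_ln[OF Qf, of p z] LQ p zQ by auto
  have "H \<subseteq> hl (M \<union> {r})" using gm r rM L by auto
  also have "\<dots> \<subseteq> Q" using hull_min[OF Qf, of "M \<union> {r}"] MQ LQ r by blast
  finally have HQ: "H \<subseteq> hl (L \<union> {z})" unfolding Q_def .
  show ?thesis using S1[OF pr HX L(1,2) _ HQ] z zL M by auto
qed

lemma G:
  assumes pr: "proregular3 X Ls" and abc: "a \<in> X" "b \<in> X" "c \<in> X" "a \<noteq> b" "c \<notin> ln a b"
    and L: "L \<in> Ls" "L \<subseteq> hl {a,b,c}"
  shows "good (hl {a,b,c}) L"
proof -
  define H where "H = hl {a,b,c}"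
  have HX: "H \<subseteq> X" unfolding H_def using hull_X abc by auto
  have Hf: "flat X Ls H" unfolding H_def using hull_flat abc by auto
  define M where "M = ln a b"
  have M: "M \<in> Ls" unfolding M_def using ln_in abc by auto
  have MX: "M \<subseteq> X" using line_sub M by auto
  have MH: "M \<subseteq> H" unfolding M_def H_def using hull_two[of a b] hull_mono[of "{a,b}" "{a,b,c}"] abc by auto
  have cH: "c \<in> H" unfolding H_def using hull_sub[of "{a,b,c}"] abc by auto
  have "H \<subseteq> hl (M \<union> {c})" unfolding H_def
    using hull_mono[of "{a,b,c}" "M \<union> {c}"] ln_left ln_right abc MX unfolding M_def by auto
  then have gM: "good H M" using S1[OF pr HX M MH _] cH abc unfolding M_def by auto
  have LH: "L \<subseteq> H" using L H_def by auto
  have "good H L"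
  proof (cases "L = M")
    case True then show ?thesis using gM by simp
  next
    case False
    show ?thesis
    proof (cases "L \<inter> M = {}")
      case False
      then obtain p where "p \<in> L" "p \<in> M" by blast
      then show ?thesis using S2[OF pr HX Hf gM L(1) LH \<open>L \<noteq> M\<close>] by auto
    next
      case True
      obtain p p2 where p: "p \<in> L" "p \<noteq> p2" "p2 \<in> L" using line_two L(1) by blast
      obtain m m2 where m: "m \<in> M" "m \<noteq> m2" "m2 \<in> M" using line_two M by blast
      have pm: "p \<noteq> m" using True p m by auto
      have pX: "p \<in> X" "m \<in> X" using p m LH MH HX by auto
      define K where "K = ln p m"
      have K: "K \<in> Ls" "p \<in> K" "m \<in> K" unfolding K_def using ln_props[OF pX pm] by auto
      have KH: "K \<subseteq> H" unfolding K_def using flat_ln[OF Hf] p m LH MH by auto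
      have KM: "K \<noteq> M" using K(2) p True by auto
      have gK: "good H K" using S2[OF pr HX Hf gM K(1) KH KM K(3) m(1)] .
      have LK: "L \<noteq> K" using K(3) m True by auto
      show ?thesis using S2[OF pr HX Hf gK L(1) LH LK p(1) K(2)] .
    qed
  qed
  then show ?thesis unfolding H_def .
qed

lemma plane_eq:
  assumes pr: "proregular3 X Ls" and P: "plane X Ls P" and L: "L \<in> Ls" "L \<subseteq> P"
    and z: "z \<in> P" "z \<notin> L"
  shows "hl (L \<union> {z}) = P"
proof -
  have Pf: "flat X Ls P" and rk: "has_rank X Ls P 3" using P unfolding plane_def by auto
  obtain B where B: "B \<subseteq> X" "finite B" "card B = 3" "P \<subseteq> hl B" using rk unfolding has_rank_def by blast
  have mn: "\<And>B'. B' \<subseteq> X \<Longrightarrow> finite B' \<Longrightarrow> P \<subseteq> hl B' \<Longrightarrow> 3 \<le> card B'"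
    using rk unfolding has_rank_def by blast
  from B(3) obtain a b c where abc: "B = {a,b,c}" "a \<noteq> b" "b \<noteq> c" "a \<noteq> c" unfolding card_3_iff by blast
  have X3: "a \<in> X" "b \<in> X" "c \<in> X" using B abc by auto
  have cab: "c \<notin> ln a b"
  proof
    assume c: "c \<in> ln a b"
    have "hl B \<subseteq> ln a b" using hull_min[OF line_flat[OF ln_in[OF X3(1,2) abc(2)]]] c
        ln_left ln_right X3 abc(1) by auto
    also have "\<dots> = hl {a,b}" using hull_two X3 by auto
    finally have "P \<subseteq> hl {a,b}" using B by auto
    then have "3 \<le> card {a,b}" using mn[of "{a,b}"] X3 by auto
    then show False using abc by auto
  qed
  have LH: "L \<subseteq> hl {a,b,c}" using L B abc by auto
  have g: "good (hl {a,b,c}) L" using G[OF pr X3 abc(2) cab L(1) LH] .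
  have "hl {a,b,c} \<subseteq> hl (L \<union> {z})" using g z B abc unfolding good_def by auto
  moreover have "hl (L \<union> {z}) \<subseteq> P" using hull_min[OF Pf] L z by auto
  ultimately show ?thesis using B abc by auto
qed


end


context lnr begin

lemma c3_use:
  assumes "cond3 X Ls" "L \<in> Ls" "oo \<in> L" "x \<in> X" "x \<notin> L" "y \<in> hl (L \<union> {x})"
    "v \<in> ln oo x" "ln v y \<inter> L = {}" "w \<in> ln oo x" "ln w y \<inter> L = {}"
  shows "v = w"
proof -
  have h: "\<forall>L\<in>Ls. \<forall>oo\<in>L. \<forall>x \<in> X - L. \<forall>y \<in> hl (L \<union> {x}).
        (\<forall>v w. v \<in> ln oo x \<and> ln v y \<inter> L = {} \<and>
               w \<in> ln oo x \<and> ln w y \<inter> L = {} \<longrightarrow> v = w)"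
    using assms(1) unfolding cond3_def .
  show ?thesis using h[rule_format, of L oo x y v w] assms(2-10) by blast
qed

lemma off_line: assumes "L \<in> Ls" "oo \<in> L" "p \<in> X" "p \<notin> L" "v \<in> ln oo p" "v \<noteq> oo"
  shows "v \<notin> L"
proof
  assume vL: "v \<in> L"
  have ooX: "oo \<in> X" using assms line_sub by auto
  have op: "oo \<noteq> p" using assms by auto
  have "ln oo p = L" using two_lines[OF ln_in[OF ooX assms(3) op] assms(1) ln_left[OF ooX assms(3)] assms(5) assms(2) vL] assms(6)
    by auto
  then show False using ln_right[OF ooX assms(3)] assms(4) by auto
qed

lemma c3_pr: assumes c3: "cond3 X Ls" shows "proregular3 X Ls"
  unfolding proregular3_def
proof (intro allI impI, elim conjE)
  fix A oo p
  assume A: "A \<subseteq> X" "finite A" "card A < 3" and oo: "oo \<in> hl A" and p: "p \<in> X - hl A"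
    and l3: "ln oo p \<noteq> {oo, p}"
  have "card A = 0 \<or> card A = 1 \<or> card A = 2" using A(3) by arith
  moreover have "card A \<noteq> 0"
  proof
    assume "card A = 0" then have "A = {}" using A by auto
    then show False using oo hull_empty by auto
  qed
  moreover
  { assume "card A = 1"
    then obtain a where a: "A = {a}" using card_1_singletonE by blast
    have aX: "a \<in> X" using a A by auto
    have hA: "hl A = {a}" using a hull_single aX by auto
    have ooa: "oo = a" using oo hA by auto
    have pX: "p \<in> X" "p \<noteq> a" using p hA by auto
    have "hl (insert p A) = ln p a" using hull_two[of p a] a pX aX by auto
    also have "\<dots> = ln a p" using ln_sym pX aX by auto
    finally have e1: "hl (insert p A) = ln a p" .
    have "ln a p = (\<Union>u \<in> ln a p. ln u a)"
    proof
      show "ln a p \<subseteq> (\<Union>u \<in> ln a p. ln u a)"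
      proof
        fix y assume y: "y \<in> ln a p"
        have "y \<in> X" using y ln_subX aX pX by auto
        then have "y \<in> ln y a" using ln_left aX by auto
        then show "y \<in> (\<Union>u \<in> ln a p. ln u a)" using y by auto
      qed
      show "(\<Union>u \<in> ln a p. ln u a) \<subseteq> ln a p"
        using ln_sub_line[OF ln_in[OF aX pX(1)] _ ln_left[OF aX pX(1)]] pX by auto
    qed
    then have "hl (insert p A) = (\<Union>u \<in> ln oo p. \<Union>a \<in> hl A. ln u a)" using e1 hA ooa by auto
  }
  moreover
  { assume "card A = 2"
    then obtain a b where ab: "A = {a,b}" "a \<noteq> b" unfolding card_2_iff by blast
    have abX: "a \<in> X" "b \<in> X" using ab A by auto
    define L where "L = ln a b"
    have L: "L \<in> Ls" unfolding L_def using ln_in abX ab by auto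
    have aL: "a \<in> L" "b \<in> L" unfolding L_def using ln_left ln_right abX by auto
    have hA: "hl A = L" unfolding L_def using hull_two abX ab by auto
    have ooL: "oo \<in> L" using oo hA by auto
    have pL: "p \<in> X" "p \<notin> L" using p hA by auto
    have LX: "L \<subseteq> X" using line_sub L by auto
    have ooX: "oo \<in> X" using ooL LX by auto
    have opn: "oo \<noteq> p" using ooL pL by auto
    define Q where "Q = hl (L \<union> {p})"
    have QA: "hl (insert p A) = Q" unfolding Q_def using hull_L_ins[OF L aL ab(2) pL(1)] ab by auto
    have Qf: "flat X Ls Q" unfolding Q_def using hull_flat LX pL by auto
    have LQ: "L \<subseteq> Q" and pQ: "p \<in> Q" unfolding Q_def using hull_sub[of "L \<union> {p}"] LX pL by auto
    have "Q = (\<Union>u \<in> ln oo p. \<Union>t \<in> L. ln u t)"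
    proof
      show "(\<Union>u \<in> ln oo p. \<Union>t \<in> L. ln u t) \<subseteq> Q"
      proof (intro UN_least)
        fix u t assume u: "u \<in> ln oo p" and t: "t \<in> L"
        have "u \<in> Q" using flat_ln[OF Qf, of oo p] ooL LQ pQ u by auto
        then show "ln u t \<subseteq> Q" using flat_ln[OF Qf] t LQ by auto
      qed
      show "Q \<subseteq> (\<Union>u \<in> ln oo p. \<Union>t \<in> L. ln u t)"
      proof
        fix y assume yQ: "y \<in> Q"
        have yX: "y \<in> X" using yQ hull_X[of "L \<union> {p}"] LX pL unfolding Q_def by blast
        show "y \<in> (\<Union>u \<in> ln oo p. \<Union>t \<in> L. ln u t)"
        proof (cases "y \<in> L")
          case True
          then show ?thesis using ln_left[OF ooX pL(1)] ln_right[OF ooX yX] by blast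
        next
          case False
          have sub: "{oo, p} \<subseteq> ln oo p" using ln_left ln_right ooX pL by auto
          then obtain q where q: "q \<in> ln oo p" "q \<noteq> oo" "q \<noteq> p" using l3 by blast
          have good_v: "y \<in> (\<Union>u \<in> ln oo p. \<Union>t \<in> L. ln u t)"
            if v: "v \<in> ln oo p" "v \<noteq> oo" "ln v y \<inter> L \<noteq> {}" for v
          proof -
            obtain t where t: "t \<in> ln v y" "t \<in> L" using v by blast
            have vL: "v \<notin> L" using off_line[OF L ooL pL v(1,2)] .
            have vX: "v \<in> X" using v ln_subX ooX pL by auto
            have vy: "v \<noteq> y" using v False by auto
            have vt: "v \<noteq> t" using vL t by auto
            have "ln v t = ln v y" using ln_eq2[OF vX yX vy ln_left[OF vX yX] t(1) vt] .
            then have "y \<in> ln v t" using ln_right[OF vX yX] by auto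
            then show ?thesis using v t by blast
          qed
          have "\<not> (ln p y \<inter> L = {} \<and> ln q y \<inter> L = {})"
          proof
            assume "ln p y \<inter> L = {} \<and> ln q y \<inter> L = {}"
            then have "p = q" using c3_use[OF c3 L ooL pL _ _ _ q(1)] yQ Q_def sub by auto
            then show False using q by auto
          qed
          then show ?thesis using good_v[of p] good_v[of q] q sub opn by blast
        qed
      qed
    qed
    then have "hl (insert p A) = (\<Union>u \<in> ln oo p. \<Union>a \<in> hl A. ln u a)" using QA hA by auto
  }
  ultimately show "hl (insert p A) = (\<Union>u \<in> ln oo p. \<Union>a \<in> hl A. ln u a)" by blast
qed


end


context lnr begin

lemma c3_pa: assumes c3: "cond3 X Ls" shows "proaffine X Ls"
  unfolding proaffine_def
proof (intro ballI)
  fix oo x y p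
  assume X3: "oo \<in> X" "x \<in> X" "y \<in> X" and p: "p \<in> ln x y - ln oo x"
  show "\<exists>u \<in> ln oo y. \<forall>v \<in> ln oo y - {u}. ln v p \<inter> ln oo x \<noteq> {}"
  proof (cases "x = y")
    case True
    then have "p = x" using p by auto
    then show ?thesis using p ln_right[OF X3(1,2)] by auto
  next
    case xy: False
    show ?thesis
    proof (cases "oo = y")
      case True then show ?thesis by auto
    next
      case oy: False
      show ?thesis
      proof (cases "oo = x")
        case True
        have px: "p \<noteq> x" using p True by auto
        have pl: "p \<in> ln oo y" using p True by auto
        have pX: "p \<in> X" using p ln_subX X3 by auto
        have "\<forall>v \<in> ln oo y - {p}. ln v p \<inter> ln oo x \<noteq> {}"
        proof
          fix v assume v: "v \<in> ln oo y - {p}"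
          have "ln v p = ln oo y" using ln_eq2[OF X3(1,3) oy] v pl by auto
          then have "oo \<in> ln v p" using ln_left X3 by auto
          then show "ln v p \<inter> ln oo x \<noteq> {}" using True by auto
        qed
        then show ?thesis using pl by blast
      next
        case ox: False
        show ?thesis
        proof (cases "p = y")
          case True
          have "\<forall>v \<in> ln oo y - {y}. ln v p \<inter> ln oo x \<noteq> {}"
          proof
            fix v assume v: "v \<in> ln oo y - {y}"
            have "ln v y = ln oo y" using ln_eq2[OF X3(1,3) oy] v ln_right[OF X3(1,3)] by auto
            then have "oo \<in> ln v p" using ln_left X3 True by auto
            then show "ln v p \<inter> ln oo x \<noteq> {}" using ln_left[OF X3(1,2)] by auto
          qed
          then show ?thesis using ln_right[OF X3(1,3)] by blast
        next
          case py: False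
          define L where "L = ln oo x"
          have L: "L \<in> Ls" "oo \<in> L" "x \<in> L" unfolding L_def using ln_props[OF X3(1,2) ox] by auto
          have yL: "y \<notin> L"
          proof
            assume "y \<in> L"
            then have "ln x y = L" using ln_eq[OF L(1) L(3) _ xy] by auto
            then show False using p L_def by auto
          qed
          have LX: "L \<subseteq> X" using line_sub L by auto
          have pQ: "p \<in> hl (L \<union> {y})"
          proof -
            have f: "flat X Ls (hl (L \<union> {y}))" using hull_flat LX X3 by auto
            have "L \<union> {y} \<subseteq> hl (L \<union> {y})" using hull_sub[of "L \<union> {y}"] LX X3 by blast
            then show ?thesis using flat_ln[OF f, of x y] L p by auto
          qed
          show ?thesis
          proof (cases "\<exists>u \<in> ln oo y. ln u p \<inter> L = {}")
            case True
            then obtain u where u: "u \<in> ln oo y" "ln u p \<inter> L = {}" by blast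
            have "\<forall>v \<in> ln oo y - {u}. ln v p \<inter> ln oo x \<noteq> {}"
            proof
              fix v assume v: "v \<in> ln oo y - {u}"
              show "ln v p \<inter> ln oo x \<noteq> {}"
              proof
                assume "ln v p \<inter> ln oo x = {}"
                then have "v = u" using c3_use[OF c3 L(1,2) X3(3) yL pQ _ _ u(1) u(2)] v L_def by auto
                then show False using v by auto
              qed
            qed
            then show ?thesis using u by blast
          next
            case False
            then show ?thesis using ln_left[OF X3(1,3)] L_def by blast
          qed
        qed
      qed
    qed
  qed
qed

lemma plane_hull: assumes L: "L \<in> Ls" and x: "x \<in> X" "x \<notin> L"
  shows "plane X Ls (hl (L \<union> {x}))"
  unfolding plane_def has_rank_def
proof (intro conjI)
  have LX: "L \<subseteq> X" using line_sub L by auto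
  show "flat X Ls (hl (L \<union> {x}))" using hull_flat LX x by auto
  obtain a b where ab: "a \<noteq> b" "a \<in> L" "b \<in> L" using line_two L by blast
  have abX: "a \<in> X" "b \<in> X" using ab LX by auto
  have sub: "L \<union> {x} \<subseteq> hl (L \<union> {x})" using hull_sub[of "L \<union> {x}"] LX x by blast
  show "\<exists>B\<subseteq>X. finite B \<and> card B = 3 \<and> hl (L \<union> {x}) \<subseteq> hl B"
  proof (rule exI[of _ "{x,a,b}"], intro conjI)
    have "x \<noteq> a" "x \<noteq> b" using x ab by auto
    then show "card {x,a,b} = 3" using ab by auto
  qed (use hull_L_ins[OF L ab(2,3,1) x(1)] abX x in auto)
  show "\<forall>B. B \<subseteq> X \<and> finite B \<and> hl (L \<union> {x}) \<subseteq> hl B \<longrightarrow> 3 \<le> card B"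
  proof (intro allI impI, elim conjE)
    fix B assume B: "B \<subseteq> X" "finite B" "hl (L \<union> {x}) \<subseteq> hl B"
    have inB: "L \<union> {x} \<subseteq> hl B" using sub B by auto
    show "3 \<le> card B"
    proof (rule ccontr)
      assume "\<not> 3 \<le> card B"
      then have "card B = 0 \<or> card B = 1 \<or> card B = 2" by arith
      moreover have "card B \<noteq> 0"
      proof
        assume "card B = 0" then have "B = {}" using B by auto
        then show False using inB hull_empty by auto
      qed
      moreover have "card B \<noteq> 1"
      proof
        assume "card B = 1" then obtain c where "B = {c}" using card_1_singletonE by blast
        then have "hl B = {c}" using hull_single B by auto
        then show False using inB ab by auto
      qed
      moreover have "card B \<noteq> 2"
      proof
        assume "card B = 2" then obtain c d where cd: "B = {c,d}" "c \<noteq> d" unfolding card_2_iff by blast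
        then have cdX: "c \<in> X" "d \<in> X" using B by auto
        then have "hl B = ln c d" using hull_two cd by auto
        then have "ln c d = L" using two_lines[OF ln_in[OF cdX cd(2)] L, of a b] inB ab by auto
        then show False using inB x \<open>hl B = ln c d\<close> by auto
      qed
      ultimately show False by blast
    qed
  qed
qed

lemma pc_c3: assumes pc: "proclus X Ls" shows "cond3 X Ls"
  unfolding cond3_def
proof (intro ballI allI impI, elim conjE)
  fix L oo x y v w
  assume L: "L \<in> Ls" and oo: "oo \<in> L" and x: "x \<in> X - L" and y: "y \<in> hl (L \<union> {x})"
    and v: "v \<in> ln oo x" "ln v y \<inter> L = {}" and w: "w \<in> ln oo x" "ln w y \<inter> L = {}"
  show "v = w"
  proof (rule ccontr)
    assume vw: "v \<noteq> w"
    define Q where "Q = hl (L \<union> {x})"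
    have LX: "L \<subseteq> X" using line_sub L by auto
    have ooX: "oo \<in> X" using oo LX by auto
    have xX: "x \<in> X" "x \<notin> L" using x by auto
    have ox: "oo \<noteq> x" using oo x by auto
    have Qf: "flat X Ls Q" unfolding Q_def using hull_flat LX xX by auto
    have QX: "Q \<subseteq> X" unfolding Q_def using hull_X LX xX by auto
    have LQ: "L \<subseteq> Q" and xQ: "x \<in> Q" unfolding Q_def using hull_sub[of "L \<union> {x}"] LX xX by auto
    have yQ: "y \<in> Q" using y Q_def by auto
    have yX: "y \<in> X" using yQ QX by auto
    have KQ: "ln oo x \<subseteq> Q" using flat_ln[OF Qf] oo LQ xQ by auto
    have vX: "v \<in> X" "w \<in> X" using v w KQ QX by auto
    have yL: "y \<notin> L" using v(2) ln_right[OF vX(1) yX] by auto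
    have vy: "v \<noteq> y"
    proof
      assume "v = y"
      then have "ln w y = ln oo x" using ln_eq2[OF ooX xX(1) ox] v w vw by auto
      then show False using w(2) ln_left[OF ooX xX(1)] oo by auto
    qed
    have wy: "w \<noteq> y"
    proof
      assume "w = y"
      then have "ln v y = ln oo x" using ln_eq2[OF ooX xX(1) ox] v w vw by auto
      then show False using v(2) ln_left[OF ooX xX(1)] oo by auto
    qed
    have l1: "ln v y \<in> Ls" "y \<in> ln v y" "ln v y \<subseteq> Q - L"
      using ln_props[OF vX(1) yX vy] flat_ln[OF Qf] v KQ yQ by auto
    have l2: "ln w y \<in> Ls" "y \<in> ln w y" "ln w y \<subseteq> Q - L"
      using ln_props[OF vX(2) yX wy] flat_ln[OF Qf] w KQ yQ by auto
    have pl: "plane X Ls Q" unfolding Q_def using plane_hull L xX by auto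
    have "ln v y = ln w y"
      using pc unfolding proclus_def using pl L LQ yQ yL l1 l2 by blast
    then have "w \<in> ln v y" using ln_left[OF vX(2) yX] by auto
    then have e1: "ln v w = ln v y" using ln_eq2[OF vX(1) yX vy ln_left[OF vX(1) yX] _ vw] by blast
    have e2: "ln v w = ln oo x" using ln_eq2[OF ooX xX(1) ox v(1) w(1) vw] .
    have "ln v y = ln oo x" using e1 e2 by simp
    then show False using v(2) ln_left[OF ooX xX(1)] oo by auto
  qed
qed


end


context lnr begin

lemma pa_use: assumes "proaffine X Ls" "oo \<in> X" "x \<in> X" "y \<in> X" "p \<in> ln x y" "p \<notin> ln oo x"
  shows "\<exists>u \<in> ln oo y. \<forall>v \<in> ln oo y - {u}. ln v p \<inter> ln oo x \<noteq> {}"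
proof -
  have h: "\<forall>oo\<in>X. \<forall>x\<in>X. \<forall>y\<in>X. \<forall>p \<in> ln x y - ln oo x.
        (\<exists>u \<in> ln oo y. \<forall>v \<in> ln oo y - {u}. ln v p \<inter> ln oo x \<noteq> {})"
    using assms(1) unfolding proaffine_def .
  show ?thesis using h assms(2-6) by blast
qed

lemma papr_c3: assumes pa: "proaffine X Ls" and pr: "proregular3 X Ls" shows "cond3 X Ls"
  unfolding cond3_def
proof (intro ballI allI impI, elim conjE)
  fix L oo x y v w
  assume L: "L \<in> Ls" and oo: "oo \<in> L" and x: "x \<in> X - L" and y: "y \<in> hl (L \<union> {x})"
    and v: "v \<in> ln oo x" "ln v y \<inter> L = {}" and w: "w \<in> ln oo x" "ln w y \<inter> L = {}"
  show "v = w"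
  proof (rule ccontr)
    assume vw: "v \<noteq> w"
    have LX: "L \<subseteq> X" using line_sub L by auto
    have ooX: "oo \<in> X" using oo LX by auto
    have xX: "x \<in> X" "x \<notin> L" using x by auto
    have ox: "oo \<noteq> x" using oo x by auto
    have yX: "y \<in> X" using y hull_X[of "L \<union> {x}"] LX xX by blast
    have vX: "v \<in> X" "w \<in> X" using v(1) w(1) ln_subX[OF ooX xX(1)] by auto
    have yL: "y \<notin> L" using v(2) ln_right[OF vX(1) yX] by auto
    have voo: "v \<noteq> oo" using v(2) ln_left[OF ooX yX] oo by auto
    have woo: "w \<noteq> oo" using w(2) ln_left[OF ooX yX] oo by auto
    have K: "ln oo x \<in> Ls" using ln_in ooX xX ox by auto
    have l3: "ln oo x \<noteq> {oo, x}" using v(1) w(1) voo woo vw by auto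
    obtain a b where ab: "a \<noteq> b" "a \<in> L" "b \<in> L" using line_two L by blast
    have abX: "a \<in> X" "b \<in> X" using ab LX by auto
    have hA: "hl {a,b} = L" using hull_line L ab by auto
    have "hl (insert x {a,b}) = (\<Union>u \<in> ln oo x. \<Union>t \<in> hl {a,b}. ln u t)"
      using pr_use[OF pr, of "{a,b}" oo x] ab abX hA oo xX l3 by auto
    moreover have "hl (insert x {a,b}) = hl (L \<union> {x})"
      using hull_L_ins[OF L ab(2,3,1) xX(1)] by simp
    ultimately have "y \<in> (\<Union>u \<in> ln oo x. \<Union>t \<in> hl {a,b}. ln u t)" using y by simp
    then obtain u t where ut: "u \<in> ln oo x" "t \<in> L" "y \<in> ln u t" unfolding hA by blast
    have uX: "u \<in> X" using ut ln_subX ooX xX by auto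
    have tX: "t \<in> X" using ut LX by auto
    show False
    proof (cases "u = oo")
      case True
      then have "y \<in> L" using ln_sub_line[OF L oo ut(2)] ut by auto
      then show False using yL by auto
    next
      case uoo: False
      show False
      proof (cases "t = oo")
        case True
        have "y \<in> ln oo x" using ln_sub_line[OF K ut(1) ln_left[OF ooX xX(1)]] ut True by auto
        have "v \<noteq> y \<or> w \<noteq> y" using vw by auto
        then show False
        proof
          assume vy: "v \<noteq> y"
          have "ln v y = ln oo x" using ln_eq2[OF ooX xX(1) ox v(1) \<open>y \<in> ln oo x\<close> vy] .
          then show False using v(2) ln_left[OF ooX xX(1)] oo by auto
        next
          assume wy: "w \<noteq> y"
          have "ln w y = ln oo x" using ln_eq2[OF ooX xX(1) ox w(1) \<open>y \<in> ln oo x\<close> wy] .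
          then show False using w(2) ln_left[OF ooX xX(1)] oo by auto
        qed
      next
        case too: False
        have uL: "u \<notin> L" using off_line[OF L oo xX ut(1) uoo] .
        have ut2: "u \<noteq> t" using uL ut by auto
        have yln: "y \<in> ln t u" using ut ln_sym[OF uX tX] by auto
        have Lt: "ln oo t = L" using ln_eq[OF L oo ut(2)] too by auto
        have ynot: "y \<notin> ln oo t" using Lt yL by auto
        obtain U where U: "U \<in> ln oo u" "\<forall>v \<in> ln oo u - {U}. ln v y \<inter> ln oo t \<noteq> {}"
          using pa_use[OF pa ooX tX uX yln ynot] by blast
        have Ku: "ln oo u = ln oo x" using ln_eq2[OF ooX xX(1) ox ln_left[OF ooX xX(1)] ut(1)] uoo by auto
        have "v = U" using U v Ku Lt by auto
        moreover have "w = U" using U w Ku Lt by auto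
        ultimately show False using vw by auto
      qed
    qed
  qed
qed


end


context lnr begin

lemma c3_pc: assumes c3: "cond3 X Ls" shows "proclus X Ls"
  unfolding proclus_def
proof (intro allI impI, elim conjE)
  fix P L x \<Lambda>1 \<Lambda>2
  assume P: "plane X Ls P" and L: "L \<in> Ls" "L \<subseteq> P" and x: "x \<in> P - L"
    and l1: "\<Lambda>1 \<in> Ls" "x \<in> \<Lambda>1" "\<Lambda>1 \<subseteq> P - L" and l2: "\<Lambda>2 \<in> Ls" "x \<in> \<Lambda>2" "\<Lambda>2 \<subseteq> P - L"
  show "\<Lambda>1 = \<Lambda>2"
  proof (rule ccontr)
    assume ne: "\<Lambda>1 \<noteq> \<Lambda>2"
    have pr: "proregular3 X Ls" using c3_pr[OF c3] .
    have Pf: "flat X Ls P" using P unfolding plane_def by auto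
    have PX: "P \<subseteq> X" using Pf unfolding flat_def by auto
    have C: "v = w" if "L' \<in> Ls" "L' \<subseteq> P" "o' \<in> L'" "z \<in> P" "z \<notin> L'" "y \<in> P"
      "v \<in> ln o' z" "ln v y \<inter> L' = {}" "w \<in> ln o' z" "ln w y \<inter> L' = {}" for L' o' z y v w
    proof -
      have "hl (L' \<union> {z}) = P" using plane_eq[OF pr P that(1,2,4,5)] .
      then show ?thesis using c3_use[OF c3 that(1,3) _ that(5) _ that(7-10)] that PX by auto
    qed
    have inter: "q = x" if "q \<in> \<Lambda>1" "q \<in> \<Lambda>2" for q
      using two_lines[OF l1(1) l2(1) l1(2) that(1) l2(2) that(2)] ne by auto
    have xX: "x \<in> X" using x PX by auto
    have L1x: "ln a x = \<Lambda>1" if "a \<in> \<Lambda>1" "a \<noteq> x" for a using ln_eq[OF l1(1) that(1) l1(2) that(2)] .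
    have L2x: "ln a x = \<Lambda>2" if "a \<in> \<Lambda>2" "a \<noteq> x" for a using ln_eq[OF l2(1) that(1) l2(2) that(2)] .
    have LX: "L \<subseteq> X" using line_sub L by auto
    have S1: "ln a b \<inter> L = {}" if a: "a \<in> \<Lambda>1" "a \<noteq> x" and b: "b \<in> \<Lambda>2" "b \<noteq> x" for a b
    proof (rule ccontr)
      assume "ln a b \<inter> L \<noteq> {}"
      then obtain t where t: "t \<in> ln a b" "t \<in> L" by blast
      have aP: "a \<in> P" "a \<notin> L" using a l1 by auto
      have bP: "b \<in> P" "b \<notin> L" using b l2 by auto
      have ab: "a \<noteq> b" using inter a b by auto
      have aX: "a \<in> X" "b \<in> X" using aP bP PX by auto
      have ta: "t \<noteq> a" using t aP by auto
      have e: "ln t a = ln a b" using ln_eq2[OF aX ab t(1) ln_left[OF aX] ta] .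
      have "a = b"
      proof (rule C[OF L t(2) aP(1) aP(2) _ ln_right[of t a] _ _ _, of x b])
        show "x \<in> P" using x by auto
        show "t \<in> X" using t LX by auto
        show "a \<in> X" using aX by auto
        show "ln a x \<inter> L = {}" using L1x[OF a] l1 by auto
        show "b \<in> ln t a" using e ln_right[OF aX] by auto
        show "ln b x \<inter> L = {}" using L2x[OF b] l2 by auto
      qed
      then show False using ab by auto
    qed
    obtain y1 where y1: "y1 \<in> \<Lambda>1" "y1 \<noteq> x" using line_two[OF l1(1)] by blast
    obtain y2 where y2: "y2 \<in> \<Lambda>2" "y2 \<noteq> x" using line_two[OF l2(1)] by blast
    have y2P: "y2 \<in> P" "y2 \<notin> L" using y2 l2 by auto
    have y2X: "y2 \<in> X" using y2P PX by auto
    have "\<exists>oo \<in> L. \<exists>w \<in> ln oo x. w \<noteq> oo \<and> w \<noteq> x"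
    proof (rule ccontr)
      assume "\<not> ?thesis"
      then have "\<forall>oo \<in> L. ln oo x = {oo, x}"
        using ln_left ln_right LX xX by blast
      then have "flat X Ls (L \<union> {x})" using flat_two_point[OF L(1) xX] x by auto
      then have "hl (L \<union> {x}) \<subseteq> L \<union> {x}" using hull_min by blast
      moreover have "hl (L \<union> {x}) = P" using plane_eq[OF pr P L] x by auto
      ultimately show False using y1 l1 by auto
    qed
    then obtain oo w where oo: "oo \<in> L" and w: "w \<in> ln oo x" "w \<noteq> oo" "w \<noteq> x" by blast
    have ooX: "oo \<in> X" using oo LX by auto
    have ox: "oo \<noteq> x" using oo x by auto
    have K: "ln oo x \<in> Ls" using ln_in[OF ooX xX ox] .
    have KP: "ln oo x \<subseteq> P" using flat_ln[OF Pf] oo L x by auto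
    have wP: "w \<in> P" using w KP by auto
    have wX: "w \<in> X" using wP PX by auto
    have oo1: "oo \<notin> \<Lambda>1" "oo \<notin> \<Lambda>2" using oo l1 l2 by auto
    have oL1: "x \<in> \<Lambda>1" using l1 by auto
    have Kx: "ln x oo = ln oo x" using ln_sym[OF xX ooX] .
    have oo_bad: "ln oo y2 \<inter> \<Lambda>1 = {}"
    proof (rule ccontr)
      assume "ln oo y2 \<inter> \<Lambda>1 \<noteq> {}"
      then obtain a where a: "a \<in> ln oo y2" "a \<in> \<Lambda>1" by blast
      have oy2: "oo \<noteq> y2" using oo y2P by auto
      show False
      proof (cases "a = x")
        case True
        have "ln x y2 = ln oo y2" using ln_eq2[OF ooX y2X oy2 a(1)[unfolded True] ln_right[OF ooX y2X]] y2 by auto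
        moreover have "ln x y2 = \<Lambda>2" using L2x[OF y2] ln_sym[OF xX y2X] by auto
        ultimately show False using ln_left[OF ooX y2X] oo1 by auto
      next
        case False
        have ay2: "a \<noteq> y2" using inter a y2 False by auto
        have "ln a y2 = ln oo y2" using ln_eq2[OF ooX y2X oy2 a(1) ln_right[OF ooX y2X] ay2] .
        then have "oo \<in> ln a y2" using ln_left[OF ooX y2X] by auto
        then show False using S1[OF a(2) False y2] oo by auto
      qed
    qed
    have "\<not> ln w y2 \<inter> \<Lambda>1 = {}"
    proof
      assume wb: "ln w y2 \<inter> \<Lambda>1 = {}"
      have "oo = w"
      proof (rule C[OF l1(1) _ l1(2) _ _ _ _ oo_bad _ wb])
        show "\<Lambda>1 \<subseteq> P" using l1 by auto
        show "oo \<in> P" using oo L by auto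
        show "oo \<notin> \<Lambda>1" using oo1 by auto
        show "y2 \<in> P" using y2P by auto
        show "oo \<in> ln x oo" using ln_right[OF xX ooX] .
        show "w \<in> ln x oo" using w Kx by auto
      qed
      then show False using w by auto
    qed
    then obtain a where a: "a \<in> ln w y2" "a \<in> \<Lambda>1" by blast
    have wy2: "w \<noteq> y2"
    proof
      assume "w = y2"
      then have "ln x y2 = ln oo x" using ln_eq2[OF ooX xX ox ln_right[OF ooX xX]] w y2 by auto
      moreover have "ln x y2 = \<Lambda>2" using L2x[OF y2] ln_sym[OF xX y2X] by auto
      ultimately show False using ln_left[OF ooX xX] oo1 by auto
    qed
    have wL2: "w \<notin> \<Lambda>2"
    proof
      assume "w \<in> \<Lambda>2"
      then have "\<Lambda>2 = ln oo x" using two_lines[OF l2(1) K l2(2) _ ln_right[OF ooX xX] w(1)] w by auto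
      then show False using ln_left[OF ooX xX] oo1 by auto
    qed
    have ax: "a \<noteq> x"
    proof
      assume "a = x"
      then have "ln x y2 = ln w y2" using ln_eq2[OF wX y2X wy2 a(1) ln_right[OF wX y2X]] y2 by auto
      moreover have "ln x y2 = \<Lambda>2" using L2x[OF y2] ln_sym[OF xX y2X] by auto
      ultimately show False using ln_left[OF wX y2X] wL2 by auto
    qed
    have wL: "w \<notin> L" using off_line[OF L(1) oo xX _ w(1) w(2)] x by auto
    have aP: "a \<in> P" using a l1 by auto
    have aX: "a \<in> X" using aP PX by auto
    have wa: "w \<noteq> a"
    proof
      assume "w = a"
      then have "w \<in> \<Lambda>1" using a by auto
      then have "\<Lambda>1 = ln oo x" using two_lines[OF l1(1) K l1(2) _ ln_right[OF ooX xX] w(1)] w by auto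
      then show False using ln_left[OF ooX xX] oo1 by auto
    qed
    have ay2: "a \<noteq> y2" using inter a y2 ax by auto
    have Kw: "ln oo w = ln oo x" using ln_eq2[OF ooX xX ox ln_left[OF ooX xX] w(1) w(2)[symmetric]] .
    have "x = w"
    proof (rule C[OF L(1,2) oo wP wL aP])
      show "x \<in> ln oo w" using Kw ln_right[OF ooX xX] by auto
      show "w \<in> ln oo w" using ln_right[OF ooX wX] .
      show "ln x a \<inter> L = {}" using L1x[OF a(2) ax] ln_sym[OF xX aX] l1 by auto
      have "ln w a = ln w y2" using ln_eq2[OF wX y2X wy2 ln_left[OF wX y2X] a(1) wa] .
      moreover have "ln a y2 = ln w y2" using ln_eq2[OF wX y2X wy2 a(1) ln_right[OF wX y2X] ay2] .
      ultimately show "ln w a \<inter> L = {}" using S1[OF a(2) ax y2] by auto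
    qed
    then show False using w by auto
  qed
qed

end

theorem theorem3p6p1:
  fixes X :: "'a set" and Ls :: "'a set set"
  assumes "liner X Ls"
  shows "(proclus X Ls \<longleftrightarrow> proaffine X Ls \<and> proregular3 X Ls) \<and>
         (proclus X Ls \<longleftrightarrow> cond3 X Ls)"
proof -
  interpret lnr X Ls using assms by (unfold_locales)
  show ?thesis using pc_c3 c3_pc c3_pa c3_pr papr_c3 by blast
qed

end
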